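(* Let $X$ be the Brady complex of $B_4$, let $R$ be a lozenge of $X$ and let $A$ be a vertex of $R$ at which the internal angle of $R$ is $2\pi/3$. Then there are exactly two lozenges $R_1,R_2$ of $X$ such that $R\cap R_1=R\cap R_2=\{A\}$ and such that each of $R\cup R_1$ and $R\cup R_2$ is contained in a flat hexagon of $X$.
   Context: Let $B_4=\langle a,b,c,d,e,f\mid ba=ae=eb,\ de=ec=cd,\ bc=cf=fb,\ df=fa=ad,\ ca=ac,\ ef=fe\rangle$ and $x=bac$. There are exactly sixteen factorizations $x=a_1a_2a_3$ with $a_i\in\{a,\dots,f\}$ (the cyclic length-3 subwords of $bcadefbacdfe$ and $faecfaecfaec$). Brady's complex $V$ has one vertex and one Euclidean tetrahedron per factorization, with edges $v_{i-1}v_i$ labelled $a_i$ (length 1), $v_0v_2,v_1v_3$ labelled $a_1a_2,a_2a_3$ (length $\sqrt2$), $v_0v_3$ labelled $x$ (length $\sqrt3$), glued along equally labelled edges; its universal cover $Y$ is CAT(0) and splits isometrically as $X\times\mathbb{R}$, the $\mathbb{R}$-factor being the direction of the central element $z=x^4$. The Brady complex $X$ is a 2-dimensional CAT(0) simplicial complex with Euclidean equilateral triangle faces; each vertex link is isomorphic to the graph obtained from the incidence graph of the Fano plane by deleting two adjacent vertices, with edge length $\pi/3$. A lozenge of $X$ is the union of two faces glued along an edge contained in exactly two faces; a flat hexagon is a subset isometric to a regular Euclidean hexagon made of faces. *)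

theory Defs
  imports Main
begin

section \<open>The braid group B_4 in the dual (Birman-Ko-Lee) presentation\<close>

datatype gen = Ga | Gb | Gc | Gd | Ge | Gf

type_synonym letter = "gen \<times> bool"   (* (g, True) = g, (g, False) = g^-1 *)
type_synonym word = "letter list"

definition pos :: "gen list \<Rightarrow> word" where
  "pos gs = map (\<lambda>g. (g, True)) gs"

definition rels :: "(gen list \<times> gen list) set" where
  "rels = {([Gb,Ga],[Ga,Ge]), ([Ga,Ge],[Ge,Gb]),
           ([Gd,Ge],[Ge,Gc]), ([Ge,Gc],[Gc,Gd]),
           ([Gb,Gc],[Gc,Gf]), ([Gc,Gf],[Gf,Gb]),
           ([Gd,Gf],[Gf,Ga]), ([Gf,Ga],[Ga,Gd]),
           ([Gc,Ga],[Ga,Gc]), ([Ge,Gf],[Gf,Ge])}"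

definition basic_pairs :: "(word \<times> word) set" where
  "basic_pairs = {([(g,s),(g,\<not>s)], []) | g s. True} \<union> {([], [(g,s),(g,\<not>s)]) | g s. True}
     \<union> {(pos l, pos r) | l r. (l, r) \<in> rels} \<union> {(pos r, pos l) | l r. (l, r) \<in> rels}"

definition bstep :: "word \<Rightarrow> word \<Rightarrow> bool" where
  "bstep u v \<longleftrightarrow> (\<exists>p s l r. (l, r) \<in> basic_pairs \<and> u = p @ l @ s \<and> v = p @ r @ s)"

definition beq :: "word \<Rightarrow> word \<Rightarrow> bool" where
  "beq = bstep\<^sup>*\<^sup>*"

definition xword :: word where "xword = pos [Gb, Ga, Gc]"

definition xpow :: "nat \<Rightarrow> word" where "xpow n = concat (replicate n xword)"

text \<open>Vertices of X: cosets g<x> (the projection of Y along the x-direction, i.e. the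
  R-factor; vertices of Y are elements of B_4).\<close>
type_synonym vertex = "word set"

definition vert :: "word \<Rightarrow> vertex" where
  "vert w = {v. \<exists>n m. beq (w @ xpow n) (v @ xpow m)}"

definition cyc3 :: "gen list \<Rightarrow> (gen \<times> gen \<times> gen) set" where
  "cyc3 w = {(w ! i, w ! ((i+1) mod length w), w ! ((i+2) mod length w)) | i. i < length w}"

text \<open>The sixteen factorizations x = a1 a2 a3.\<close>
definition facts :: "(gen \<times> gen \<times> gen) set" where
  "facts = cyc3 [Gb,Gc,Ga,Gd,Ge,Gf,Gb,Ga,Gc,Gd,Gf,Ge] \<union> cyc3 [Gf,Ga,Ge,Gc,Gf,Ga,Ge,Gc,Gf,Ga,Ge,Gc]"

text \<open>Faces of X: projections of the tetrahedra g.(1, a1, a1a2, x) of Y.\<close>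
definition faces :: "vertex set set" where
  "faces = {{vert w, vert (w @ pos [a1]), vert (w @ pos [a1, a2])} | w a1 a2 a3. (a1, a2, a3) \<in> facts}"

definition lozenge :: "vertex set set \<Rightarrow> bool" where
  "lozenge R \<longleftrightarrow> (\<exists>T1 T2. R = {T1, T2} \<and> T1 \<in> faces \<and> T2 \<in> faces \<and> T1 \<noteq> T2
      \<and> card (T1 \<inter> T2) = 2 \<and> card {T \<in> faces. T1 \<inter> T2 \<subseteq> T} = 2)"

definition flat_hexagon :: "vertex set set \<Rightarrow> bool" where
  "flat_hexagon H \<longleftrightarrow> (\<exists>c u. inj_on u {..<6::nat} \<and> c \<notin> u ` {..<6}
      \<and> H = {{c, u i, u ((i + 1) mod 6)} | i. i < 6} \<and> H \<subseteq> faces)"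

end

theory Submission
  imports Defs
begin

lemma bp_sym: "(l, r) \<in> basic_pairs \<Longrightarrow> (r, l) \<in> basic_pairs"
  unfolding basic_pairs_def by auto

lemma bstep_sym: "bstep u v \<Longrightarrow> bstep v u"
  unfolding bstep_def using bp_sym by blast

lemma beq_refl: "beq u u" unfolding beq_def by simp

lemma beq_trans[trans]: "beq u v \<Longrightarrow> beq v w \<Longrightarrow> beq u w"
  unfolding beq_def by (rule rtranclp_trans)

lemma beq_sym: "beq u v \<Longrightarrow> beq v u"
  unfolding beq_def
proof (induction rule: rtranclp_induct)
  case base then show ?case by simp
next
  case (step y z)
  then show ?case by (meson bstep_sym converse_rtranclp_into_rtranclp)
qed

lemma bstep_app: "bstep u v \<Longrightarrow> bstep (p @ u @ s) (p @ v @ s)"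
proof -
  assume "bstep u v"
  then obtain p' s' l r where "(l, r) \<in> basic_pairs" "u = p' @ l @ s'" "v = p' @ r @ s'"
    unfolding bstep_def by blast
  then show ?thesis unfolding bstep_def
    by (intro exI[of _ "p @ p'"] exI[of _ "s' @ s"] exI[of _ l] exI[of _ r]) auto
qed

lemma beq_app: "beq u v \<Longrightarrow> beq (p @ u @ s) (p @ v @ s)"
  unfolding beq_def
proof (induction rule: rtranclp_induct)
  case base then show ?case by simp
next
  case (step y z)
  then show ?case by (meson bstep_app rtranclp.rtrancl_into_rtrancl)
qed

lemma beq_appR: "beq u v \<Longrightarrow> beq (u @ s) (v @ s)"
  using beq_app[of u v "[]" s] by simp

lemma beq_appL: "beq u v \<Longrightarrow> beq (p @ u) (p @ v)"
  using beq_app[of u v p "[]"] by simp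

lemma pos_append: "pos (a @ b) = pos a @ pos b"
  unfolding pos_def by simp

lemma relstep: "(l, r) \<in> rels \<or> (r, l) \<in> rels \<Longrightarrow> w = p @ l @ s \<Longrightarrow> w' = p @ r @ s
   \<Longrightarrow> beq (pos w) (pos w')"
proof -
  assume h: "(l, r) \<in> rels \<or> (r, l) \<in> rels" and w: "w = p @ l @ s" "w' = p @ r @ s"
  have "(pos l, pos r) \<in> basic_pairs" using h unfolding basic_pairs_def by blast
  then have "bstep (pos w) (pos w')" unfolding bstep_def w pos_append by blast
  then show ?thesis unfolding beq_def by simp
qed


lemma comm_a: "beq (pos [Ga,Gb,Ga,Gc]) (pos [Gb,Ga,Gc,Gf])"
proof -
  have "beq (pos [Ga,Gb,Ga,Gc]) (pos [Ga,Ga,Ge,Gc])"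
    by (rule relstep[where l="[Gb,Ga]" and r="[Ga,Ge]" and p="[Ga]" and s="[Gc]"]) (simp_all add: rels_def)
  also have "beq (pos [Ga,Ga,Ge,Gc]) (pos [Ga,Ge,Gb,Gc])"
    by (rule relstep[where l="[Ga,Ge]" and r="[Ge,Gb]" and p="[Ga]" and s="[Gc]"]) (simp_all add: rels_def)
  also have "beq (pos [Ga,Ge,Gb,Gc]) (pos [Gb,Ga,Gb,Gc])"
    by (rule relstep[where l="[Ga,Ge]" and r="[Gb,Ga]" and p="[]" and s="[Gb,Gc]"]) (simp_all add: rels_def)
  also have "beq (pos [Gb,Ga,Gb,Gc]) (pos [Gb,Ga,Gc,Gf])"
    by (rule relstep[where l="[Gb,Gc]" and r="[Gc,Gf]" and p="[Gb,Ga]" and s="[]"]) (simp_all add: rels_def)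
  finally show ?thesis .
qed

lemma comm_b: "beq (pos [Gb,Gb,Ga,Gc]) (pos [Gb,Ga,Gc,Gd])"
proof -
  have "beq (pos [Gb,Gb,Ga,Gc]) (pos [Gb,Ga,Ge,Gc])"
    by (rule relstep[where l="[Gb,Ga]" and r="[Ga,Ge]" and p="[Gb]" and s="[Gc]"]) (simp_all add: rels_def)
  also have "beq (pos [Gb,Ga,Ge,Gc]) (pos [Gb,Ga,Gc,Gd])"
    by (rule relstep[where l="[Ge,Gc]" and r="[Gc,Gd]" and p="[Gb,Ga]" and s="[]"]) (simp_all add: rels_def)
  finally show ?thesis .
qed

lemma comm_c: "beq (pos [Gc,Gb,Ga,Gc]) (pos [Gb,Ga,Gc,Ge])"
proof -
  have "beq (pos [Gc,Gb,Ga,Gc]) (pos [Gc,Ga,Ge,Gc])"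
    by (rule relstep[where l="[Gb,Ga]" and r="[Ga,Ge]" and p="[Gc]" and s="[Gc]"]) (simp_all add: rels_def)
  also have "beq (pos [Gc,Ga,Ge,Gc]) (pos [Ga,Gc,Ge,Gc])"
    by (rule relstep[where l="[Gc,Ga]" and r="[Ga,Gc]" and p="[]" and s="[Ge,Gc]"]) (simp_all add: rels_def)
  also have "beq (pos [Ga,Gc,Ge,Gc]) (pos [Ga,Gc,Gd,Ge])"
    by (rule relstep[where l="[Ge,Gc]" and r="[Gd,Ge]" and p="[Ga,Gc]" and s="[]"]) (simp_all add: rels_def)
  also have "beq (pos [Ga,Gc,Gd,Ge]) (pos [Ga,Ge,Gc,Ge])"
    by (rule relstep[where l="[Gc,Gd]" and r="[Ge,Gc]" and p="[Ga]" and s="[Ge]"]) (simp_all add: rels_def)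
  also have "beq (pos [Ga,Ge,Gc,Ge]) (pos [Gb,Ga,Gc,Ge])"
    by (rule relstep[where l="[Ga,Ge]" and r="[Gb,Ga]" and p="[]" and s="[Gc,Ge]"]) (simp_all add: rels_def)
  finally show ?thesis .
qed

lemma comm_d: "beq (pos [Gd,Gb,Ga,Gc]) (pos [Gb,Ga,Gc,Gb])"
proof -
  have "beq (pos [Gd,Gb,Ga,Gc]) (pos [Gd,Ga,Ge,Gc])"
    by (rule relstep[where l="[Gb,Ga]" and r="[Ga,Ge]" and p="[Gd]" and s="[Gc]"]) (simp_all add: rels_def)
  also have "beq (pos [Gd,Ga,Ge,Gc]) (pos [Gd,Ge,Gb,Gc])"
    by (rule relstep[where l="[Ga,Ge]" and r="[Ge,Gb]" and p="[Gd]" and s="[Gc]"]) (simp_all add: rels_def)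
  also have "beq (pos [Gd,Ge,Gb,Gc]) (pos [Ge,Gc,Gb,Gc])"
    by (rule relstep[where l="[Gd,Ge]" and r="[Ge,Gc]" and p="[]" and s="[Gb,Gc]"]) (simp_all add: rels_def)
  also have "beq (pos [Ge,Gc,Gb,Gc]) (pos [Ge,Gc,Gc,Gf])"
    by (rule relstep[where l="[Gb,Gc]" and r="[Gc,Gf]" and p="[Ge,Gc]" and s="[]"]) (simp_all add: rels_def)
  also have "beq (pos [Ge,Gc,Gc,Gf]) (pos [Ge,Gc,Gf,Gb])"
    by (rule relstep[where l="[Gc,Gf]" and r="[Gf,Gb]" and p="[Ge,Gc]" and s="[]"]) (simp_all add: rels_def)
  also have "beq (pos [Ge,Gc,Gf,Gb]) (pos [Ge,Gb,Gc,Gb])"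
    by (rule relstep[where l="[Gc,Gf]" and r="[Gb,Gc]" and p="[Ge]" and s="[Gb]"]) (simp_all add: rels_def)
  also have "beq (pos [Ge,Gb,Gc,Gb]) (pos [Ga,Ge,Gc,Gb])"
    by (rule relstep[where l="[Ge,Gb]" and r="[Ga,Ge]" and p="[]" and s="[Gc,Gb]"]) (simp_all add: rels_def)
  also have "beq (pos [Ga,Ge,Gc,Gb]) (pos [Gb,Ga,Gc,Gb])"
    by (rule relstep[where l="[Ga,Ge]" and r="[Gb,Ga]" and p="[]" and s="[Gc,Gb]"]) (simp_all add: rels_def)
  finally show ?thesis .
qed

lemma comm_e: "beq (pos [Ge,Gb,Ga,Gc]) (pos [Gb,Ga,Gc,Ga])"
proof -
  have "beq (pos [Ge,Gb,Ga,Gc]) (pos [Ga,Ge,Ga,Gc])"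
    by (rule relstep[where l="[Ge,Gb]" and r="[Ga,Ge]" and p="[]" and s="[Ga,Gc]"]) (simp_all add: rels_def)
  also have "beq (pos [Ga,Ge,Ga,Gc]) (pos [Gb,Ga,Ga,Gc])"
    by (rule relstep[where l="[Ga,Ge]" and r="[Gb,Ga]" and p="[]" and s="[Ga,Gc]"]) (simp_all add: rels_def)
  also have "beq (pos [Gb,Ga,Ga,Gc]) (pos [Gb,Ga,Gc,Ga])"
    by (rule relstep[where l="[Ga,Gc]" and r="[Gc,Ga]" and p="[Gb,Ga]" and s="[]"]) (simp_all add: rels_def)
  finally show ?thesis .
qed

lemma comm_f: "beq (pos [Gf,Gb,Ga,Gc]) (pos [Gb,Ga,Gc,Gc])"
proof -
  have "beq (pos [Gf,Gb,Ga,Gc]) (pos [Gc,Gf,Ga,Gc])"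
    by (rule relstep[where l="[Gf,Gb]" and r="[Gc,Gf]" and p="[]" and s="[Ga,Gc]"]) (simp_all add: rels_def)
  also have "beq (pos [Gc,Gf,Ga,Gc]) (pos [Gb,Gc,Ga,Gc])"
    by (rule relstep[where l="[Gc,Gf]" and r="[Gb,Gc]" and p="[]" and s="[Ga,Gc]"]) (simp_all add: rels_def)
  also have "beq (pos [Gb,Gc,Ga,Gc]) (pos [Gb,Ga,Gc,Gc])"
    by (rule relstep[where l="[Gc,Ga]" and r="[Ga,Gc]" and p="[Gb]" and s="[Gc]"]) (simp_all add: rels_def)
  finally show ?thesis .
qed

lemma xf_acd: "beq (pos [Gb,Ga,Gc]) (pos [Ga,Gc,Gd])"
proof -
  have "beq (pos [Gb,Ga,Gc]) (pos [Ga,Ge,Gc])"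
    by (rule relstep[where l="[Gb,Ga]" and r="[Ga,Ge]" and p="[]" and s="[Gc]"]) (simp_all add: rels_def)
  also have "beq (pos [Ga,Ge,Gc]) (pos [Ga,Gc,Gd])"
    by (rule relstep[where l="[Ge,Gc]" and r="[Gc,Gd]" and p="[Ga]" and s="[]"]) (simp_all add: rels_def)
  finally show ?thesis .
qed

lemma rp_acd: "beq (pos [Ga,Gc]) (pos [Ga,Gc])"
  by (rule beq_refl)

lemma xf_ade: "beq (pos [Gb,Ga,Gc]) (pos [Ga,Gd,Ge])"
proof -
  have "beq (pos [Gb,Ga,Gc]) (pos [Ga,Ge,Gc])"
    by (rule relstep[where l="[Gb,Ga]" and r="[Ga,Ge]" and p="[]" and s="[Gc]"]) (simp_all add: rels_def)
  also have "beq (pos [Ga,Ge,Gc]) (pos [Ga,Gd,Ge])"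
    by (rule relstep[where l="[Ge,Gc]" and r="[Gd,Ge]" and p="[Ga]" and s="[]"]) (simp_all add: rels_def)
  finally show ?thesis .
qed

lemma rp_ade: "beq (pos [Ga,Gd]) (pos [Ga,Gd])"
  by (rule beq_refl)

lemma xf_aec: "beq (pos [Gb,Ga,Gc]) (pos [Ga,Ge,Gc])"
  by (rule relstep[where l="[Gb,Ga]" and r="[Ga,Ge]" and p="[]" and s="[Gc]"]) (simp_all add: rels_def)

lemma rp_aec: "beq (pos [Ga,Ge]) (pos [Gb,Ga])"
  by (rule relstep[where l="[Ga,Ge]" and r="[Gb,Ga]" and p="[]" and s="[]"]) (simp_all add: rels_def)

lemma xf_bac: "beq (pos [Gb,Ga,Gc]) (pos [Gb,Ga,Gc])"
  by (rule beq_refl)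

lemma rp_bac: "beq (pos [Gb,Ga]) (pos [Gb,Ga])"
  by (rule beq_refl)

lemma xf_bca: "beq (pos [Gb,Ga,Gc]) (pos [Gb,Gc,Ga])"
  by (rule relstep[where l="[Ga,Gc]" and r="[Gc,Ga]" and p="[Gb]" and s="[]"]) (simp_all add: rels_def)

lemma rp_bca: "beq (pos [Gb,Gc]) (pos [Gb,Gc])"
  by (rule beq_refl)

lemma xf_cad: "beq (pos [Gb,Ga,Gc]) (pos [Gc,Ga,Gd])"
proof -
  have "beq (pos [Gb,Ga,Gc]) (pos [Ga,Ge,Gc])"
    by (rule relstep[where l="[Gb,Ga]" and r="[Ga,Ge]" and p="[]" and s="[Gc]"]) (simp_all add: rels_def)
  also have "beq (pos [Ga,Ge,Gc]) (pos [Ga,Gc,Gd])"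
    by (rule relstep[where l="[Ge,Gc]" and r="[Gc,Gd]" and p="[Ga]" and s="[]"]) (simp_all add: rels_def)
  also have "beq (pos [Ga,Gc,Gd]) (pos [Gc,Ga,Gd])"
    by (rule relstep[where l="[Ga,Gc]" and r="[Gc,Ga]" and p="[]" and s="[Gd]"]) (simp_all add: rels_def)
  finally show ?thesis .
qed

lemma rp_cad: "beq (pos [Gc,Ga]) (pos [Ga,Gc])"
  by (rule relstep[where l="[Gc,Ga]" and r="[Ga,Gc]" and p="[]" and s="[]"]) (simp_all add: rels_def)

lemma xf_cdf: "beq (pos [Gb,Ga,Gc]) (pos [Gc,Gd,Gf])"
proof -
  have "beq (pos [Gb,Ga,Gc]) (pos [Gb,Gc,Ga])"
    by (rule relstep[where l="[Ga,Gc]" and r="[Gc,Ga]" and p="[Gb]" and s="[]"]) (simp_all add: rels_def)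
  also have "beq (pos [Gb,Gc,Ga]) (pos [Gc,Gf,Ga])"
    by (rule relstep[where l="[Gb,Gc]" and r="[Gc,Gf]" and p="[]" and s="[Ga]"]) (simp_all add: rels_def)
  also have "beq (pos [Gc,Gf,Ga]) (pos [Gc,Gd,Gf])"
    by (rule relstep[where l="[Gf,Ga]" and r="[Gd,Gf]" and p="[Gc]" and s="[]"]) (simp_all add: rels_def)
  finally show ?thesis .
qed

lemma rp_cdf: "beq (pos [Gc,Gd]) (pos [Gc,Gd])"
  by (rule beq_refl)

lemma xf_cfa: "beq (pos [Gb,Ga,Gc]) (pos [Gc,Gf,Ga])"
proof -
  have "beq (pos [Gb,Ga,Gc]) (pos [Gb,Gc,Ga])"
    by (rule relstep[where l="[Ga,Gc]" and r="[Gc,Ga]" and p="[Gb]" and s="[]"]) (simp_all add: rels_def)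
  also have "beq (pos [Gb,Gc,Ga]) (pos [Gc,Gf,Ga])"
    by (rule relstep[where l="[Gb,Gc]" and r="[Gc,Gf]" and p="[]" and s="[Ga]"]) (simp_all add: rels_def)
  finally show ?thesis .
qed

lemma rp_cfa: "beq (pos [Gc,Gf]) (pos [Gb,Gc])"
  by (rule relstep[where l="[Gc,Gf]" and r="[Gb,Gc]" and p="[]" and s="[]"]) (simp_all add: rels_def)

lemma xf_def: "beq (pos [Gb,Ga,Gc]) (pos [Gd,Ge,Gf])"
proof -
  have "beq (pos [Gb,Ga,Gc]) (pos [Ga,Ge,Gc])"
    by (rule relstep[where l="[Gb,Ga]" and r="[Ga,Ge]" and p="[]" and s="[Gc]"]) (simp_all add: rels_def)
  also have "beq (pos [Ga,Ge,Gc]) (pos [Ge,Gb,Gc])"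
    by (rule relstep[where l="[Ga,Ge]" and r="[Ge,Gb]" and p="[]" and s="[Gc]"]) (simp_all add: rels_def)
  also have "beq (pos [Ge,Gb,Gc]) (pos [Ge,Gc,Gf])"
    by (rule relstep[where l="[Gb,Gc]" and r="[Gc,Gf]" and p="[Ge]" and s="[]"]) (simp_all add: rels_def)
  also have "beq (pos [Ge,Gc,Gf]) (pos [Gd,Ge,Gf])"
    by (rule relstep[where l="[Ge,Gc]" and r="[Gd,Ge]" and p="[]" and s="[Gf]"]) (simp_all add: rels_def)
  finally show ?thesis .
qed

lemma rp_def: "beq (pos [Gd,Ge]) (pos [Gc,Gd])"
proof -
  have "beq (pos [Gd,Ge]) (pos [Ge,Gc])"
    by (rule relstep[where l="[Gd,Ge]" and r="[Ge,Gc]" and p="[]" and s="[]"]) (simp_all add: rels_def)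
  also have "beq (pos [Ge,Gc]) (pos [Gc,Gd])"
    by (rule relstep[where l="[Ge,Gc]" and r="[Gc,Gd]" and p="[]" and s="[]"]) (simp_all add: rels_def)
  finally show ?thesis .
qed

lemma xf_dfe: "beq (pos [Gb,Ga,Gc]) (pos [Gd,Gf,Ge])"
proof -
  have "beq (pos [Gb,Ga,Gc]) (pos [Ga,Ge,Gc])"
    by (rule relstep[where l="[Gb,Ga]" and r="[Ga,Ge]" and p="[]" and s="[Gc]"]) (simp_all add: rels_def)
  also have "beq (pos [Ga,Ge,Gc]) (pos [Ga,Gd,Ge])"
    by (rule relstep[where l="[Ge,Gc]" and r="[Gd,Ge]" and p="[Ga]" and s="[]"]) (simp_all add: rels_def)
  also have "beq (pos [Ga,Gd,Ge]) (pos [Gf,Ga,Ge])"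
    by (rule relstep[where l="[Ga,Gd]" and r="[Gf,Ga]" and p="[]" and s="[Ge]"]) (simp_all add: rels_def)
  also have "beq (pos [Gf,Ga,Ge]) (pos [Gd,Gf,Ge])"
    by (rule relstep[where l="[Gf,Ga]" and r="[Gd,Gf]" and p="[]" and s="[Ge]"]) (simp_all add: rels_def)
  finally show ?thesis .
qed

lemma rp_dfe: "beq (pos [Gd,Gf]) (pos [Ga,Gd])"
proof -
  have "beq (pos [Gd,Gf]) (pos [Gf,Ga])"
    by (rule relstep[where l="[Gd,Gf]" and r="[Gf,Ga]" and p="[]" and s="[]"]) (simp_all add: rels_def)
  also have "beq (pos [Gf,Ga]) (pos [Ga,Gd])"
    by (rule relstep[where l="[Gf,Ga]" and r="[Ga,Gd]" and p="[]" and s="[]"]) (simp_all add: rels_def)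
  finally show ?thesis .
qed

lemma xf_ebc: "beq (pos [Gb,Ga,Gc]) (pos [Ge,Gb,Gc])"
proof -
  have "beq (pos [Gb,Ga,Gc]) (pos [Ga,Ge,Gc])"
    by (rule relstep[where l="[Gb,Ga]" and r="[Ga,Ge]" and p="[]" and s="[Gc]"]) (simp_all add: rels_def)
  also have "beq (pos [Ga,Ge,Gc]) (pos [Ge,Gb,Gc])"
    by (rule relstep[where l="[Ga,Ge]" and r="[Ge,Gb]" and p="[]" and s="[Gc]"]) (simp_all add: rels_def)
  finally show ?thesis .
qed

lemma rp_ebc: "beq (pos [Ge,Gb]) (pos [Gb,Ga])"
proof -
  have "beq (pos [Ge,Gb]) (pos [Ga,Ge])"
    by (rule relstep[where l="[Ge,Gb]" and r="[Ga,Ge]" and p="[]" and s="[]"]) (simp_all add: rels_def)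
  also have "beq (pos [Ga,Ge]) (pos [Gb,Ga])"
    by (rule relstep[where l="[Ga,Ge]" and r="[Gb,Ga]" and p="[]" and s="[]"]) (simp_all add: rels_def)
  finally show ?thesis .
qed

lemma xf_ecf: "beq (pos [Gb,Ga,Gc]) (pos [Ge,Gc,Gf])"
proof -
  have "beq (pos [Gb,Ga,Gc]) (pos [Ga,Ge,Gc])"
    by (rule relstep[where l="[Gb,Ga]" and r="[Ga,Ge]" and p="[]" and s="[Gc]"]) (simp_all add: rels_def)
  also have "beq (pos [Ga,Ge,Gc]) (pos [Ge,Gb,Gc])"
    by (rule relstep[where l="[Ga,Ge]" and r="[Ge,Gb]" and p="[]" and s="[Gc]"]) (simp_all add: rels_def)
  also have "beq (pos [Ge,Gb,Gc]) (pos [Ge,Gc,Gf])"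
    by (rule relstep[where l="[Gb,Gc]" and r="[Gc,Gf]" and p="[Ge]" and s="[]"]) (simp_all add: rels_def)
  finally show ?thesis .
qed

lemma rp_ecf: "beq (pos [Ge,Gc]) (pos [Gc,Gd])"
  by (rule relstep[where l="[Ge,Gc]" and r="[Gc,Gd]" and p="[]" and s="[]"]) (simp_all add: rels_def)

lemma xf_efb: "beq (pos [Gb,Ga,Gc]) (pos [Ge,Gf,Gb])"
proof -
  have "beq (pos [Gb,Ga,Gc]) (pos [Ga,Ge,Gc])"
    by (rule relstep[where l="[Gb,Ga]" and r="[Ga,Ge]" and p="[]" and s="[Gc]"]) (simp_all add: rels_def)
  also have "beq (pos [Ga,Ge,Gc]) (pos [Ge,Gb,Gc])"
    by (rule relstep[where l="[Ga,Ge]" and r="[Ge,Gb]" and p="[]" and s="[Gc]"]) (simp_all add: rels_def)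
  also have "beq (pos [Ge,Gb,Gc]) (pos [Ge,Gc,Gf])"
    by (rule relstep[where l="[Gb,Gc]" and r="[Gc,Gf]" and p="[Ge]" and s="[]"]) (simp_all add: rels_def)
  also have "beq (pos [Ge,Gc,Gf]) (pos [Ge,Gf,Gb])"
    by (rule relstep[where l="[Gc,Gf]" and r="[Gf,Gb]" and p="[Ge]" and s="[]"]) (simp_all add: rels_def)
  finally show ?thesis .
qed

lemma rp_efb: "beq (pos [Ge,Gf]) (pos [Ge,Gf])"
  by (rule beq_refl)

lemma xf_fae: "beq (pos [Gb,Ga,Gc]) (pos [Gf,Ga,Ge])"
proof -
  have "beq (pos [Gb,Ga,Gc]) (pos [Ga,Ge,Gc])"
    by (rule relstep[where l="[Gb,Ga]" and r="[Ga,Ge]" and p="[]" and s="[Gc]"]) (simp_all add: rels_def)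
  also have "beq (pos [Ga,Ge,Gc]) (pos [Ga,Gd,Ge])"
    by (rule relstep[where l="[Ge,Gc]" and r="[Gd,Ge]" and p="[Ga]" and s="[]"]) (simp_all add: rels_def)
  also have "beq (pos [Ga,Gd,Ge]) (pos [Gf,Ga,Ge])"
    by (rule relstep[where l="[Ga,Gd]" and r="[Gf,Ga]" and p="[]" and s="[Ge]"]) (simp_all add: rels_def)
  finally show ?thesis .
qed

lemma rp_fae: "beq (pos [Gf,Ga]) (pos [Ga,Gd])"
  by (rule relstep[where l="[Gf,Ga]" and r="[Ga,Gd]" and p="[]" and s="[]"]) (simp_all add: rels_def)

lemma xf_fba: "beq (pos [Gb,Ga,Gc]) (pos [Gf,Gb,Ga])"
proof -
  have "beq (pos [Gb,Ga,Gc]) (pos [Gb,Gc,Ga])"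
    by (rule relstep[where l="[Ga,Gc]" and r="[Gc,Ga]" and p="[Gb]" and s="[]"]) (simp_all add: rels_def)
  also have "beq (pos [Gb,Gc,Ga]) (pos [Gc,Gf,Ga])"
    by (rule relstep[where l="[Gb,Gc]" and r="[Gc,Gf]" and p="[]" and s="[Ga]"]) (simp_all add: rels_def)
  also have "beq (pos [Gc,Gf,Ga]) (pos [Gf,Gb,Ga])"
    by (rule relstep[where l="[Gc,Gf]" and r="[Gf,Gb]" and p="[]" and s="[Ga]"]) (simp_all add: rels_def)
  finally show ?thesis .
qed

lemma rp_fba: "beq (pos [Gf,Gb]) (pos [Gb,Gc])"
proof -
  have "beq (pos [Gf,Gb]) (pos [Gc,Gf])"
    by (rule relstep[where l="[Gf,Gb]" and r="[Gc,Gf]" and p="[]" and s="[]"]) (simp_all add: rels_def)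
  also have "beq (pos [Gc,Gf]) (pos [Gb,Gc])"
    by (rule relstep[where l="[Gc,Gf]" and r="[Gb,Gc]" and p="[]" and s="[]"]) (simp_all add: rels_def)
  finally show ?thesis .
qed

lemma xf_feb: "beq (pos [Gb,Ga,Gc]) (pos [Gf,Ge,Gb])"
proof -
  have "beq (pos [Gb,Ga,Gc]) (pos [Ga,Ge,Gc])"
    by (rule relstep[where l="[Gb,Ga]" and r="[Ga,Ge]" and p="[]" and s="[Gc]"]) (simp_all add: rels_def)
  also have "beq (pos [Ga,Ge,Gc]) (pos [Ga,Gd,Ge])"
    by (rule relstep[where l="[Ge,Gc]" and r="[Gd,Ge]" and p="[Ga]" and s="[]"]) (simp_all add: rels_def)
  also have "beq (pos [Ga,Gd,Ge]) (pos [Gf,Ga,Ge])"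
    by (rule relstep[where l="[Ga,Gd]" and r="[Gf,Ga]" and p="[]" and s="[Ge]"]) (simp_all add: rels_def)
  also have "beq (pos [Gf,Ga,Ge]) (pos [Gf,Ge,Gb])"
    by (rule relstep[where l="[Ga,Ge]" and r="[Ge,Gb]" and p="[Gf]" and s="[]"]) (simp_all add: rels_def)
  finally show ?thesis .
qed

lemma rp_feb: "beq (pos [Gf,Ge]) (pos [Ge,Gf])"
  by (rule relstep[where l="[Gf,Ge]" and r="[Ge,Gf]" and p="[]" and s="[]"]) (simp_all add: rels_def)

fun deg :: "word \<Rightarrow> int" where
  "deg [] = 0"
| "deg (l # w) = (if snd l then 1 else -1) + deg w"

definition sw :: "nat \<Rightarrow> nat \<Rightarrow> nat \<Rightarrow> nat" where
  "sw i j k = (if k = i then j else if k = j then i else k)"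

fun tr :: "gen \<Rightarrow> nat \<Rightarrow> nat" where
  "tr Ga = sw 0 1" | "tr Gb = sw 0 2" | "tr Gc = sw 2 3"
| "tr Gd = sw 1 3" | "tr Ge = sw 1 2" | "tr Gf = sw 0 3"

fun act :: "word \<Rightarrow> nat \<Rightarrow> nat" where
  "act [] = id"
| "act (l # w) = tr (fst l) \<circ> act w"

lemma deg_append: "deg (u @ v) = deg u + deg v"
  by (induction u) auto

lemma act_append: "act (u @ v) = act u \<circ> act v"
  by (induction u) (auto simp: comp_assoc)

lemma tr_tr: "tr g (tr g k) = k"
  by (cases g) (auto simp: sw_def)

lemma tr_bij: "bij (tr g)"
  by (metis bijI' tr_tr)

lemma act_bij: "bij (act w)"
proof (induction w)
  case Nil then show ?case by (simp add: bij_id[unfolded id_def])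
next
  case (Cons a w)
  have "bij (tr (fst a) \<circ> act w)" by (rule bij_comp[OF Cons tr_bij])
  then show ?case by (simp only: act.simps)
qed

lemma deg_pos: "deg (pos ws) = int (length ws)"
  by (induction ws) (auto simp: pos_def)

lemma rels_inv: "(l, r) \<in> rels \<Longrightarrow> act (pos l) = act (pos r)"
  unfolding rels_def pos_def
  apply (simp only: insert_iff empty_iff prod.inject)
  apply (elim disjE conjE; simp only: list.map; simp only: act.simps fst_conv tr.simps)
  apply (simp_all add: fun_eq_iff sw_def)
  done

lemma rels_deg: "(l, r) \<in> rels \<Longrightarrow> deg (pos l) = deg (pos r)"
  unfolding rels_def by (auto simp: deg_pos)

lemma basic_inv: "(l, r) \<in> basic_pairs \<Longrightarrow> deg l = deg r \<and> act l = act r"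
proof -
  assume "(l, r) \<in> basic_pairs"
  then consider (c1) g s where "l = [(g,s),(g,\<not>s)]" "r = []"
    | (c2) g s where "r = [(g,s),(g,\<not>s)]" "l = []"
    | (c3) a b where "(a, b) \<in> rels" "l = pos a" "r = pos b"
    | (c4) a b where "(a, b) \<in> rels" "l = pos b" "r = pos a"
    unfolding basic_pairs_def by blast
  then show ?thesis
    by cases (auto simp: fun_eq_iff tr_tr rels_inv rels_deg)
qed

lemma bstep_inv: "bstep u v \<Longrightarrow> deg u = deg v \<and> act u = act v"
  unfolding bstep_def using basic_inv by (auto simp: deg_append act_append)

lemma beq_inv: "beq u v \<Longrightarrow> deg u = deg v \<and> act u = act v"
  unfolding beq_def
  by (induction rule: rtranclp_induct) (auto dest: bstep_inv)

lemma deg_xword: "deg xword = 3" by (simp add: xword_def pos_def)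

lemma xpow_Suc: "xpow (Suc n) = xword @ xpow n" by (simp add: xpow_def)
lemma xpow_0: "xpow 0 = []" by (simp add: xpow_def)
lemma xpow_add: "xpow (n + m) = xpow n @ xpow m" by (simp add: xpow_def replicate_add)

lemma deg_xpow: "deg (xpow n) = 3 * int n"
  by (induction n) (auto simp: xpow_0 xpow_Suc deg_append deg_xword)

definition vrel :: "word \<Rightarrow> word \<Rightarrow> bool" where
  "vrel u v \<longleftrightarrow> (\<exists>n m. beq (u @ xpow n) (v @ xpow m))"

lemma vert_vrel: "vert u = Collect (vrel u)"
  unfolding vert_def vrel_def by simp

lemma vrel_refl: "vrel u u"
  unfolding vrel_def using beq_refl by blast

lemma vrel_sym: "vrel u v \<Longrightarrow> vrel v u"
  unfolding vrel_def using beq_sym by blast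

lemma vrel_trans: "vrel u v \<Longrightarrow> vrel v w \<Longrightarrow> vrel u w"
proof -
  assume "vrel u v" "vrel v w"
  then obtain n m p q where h1: "beq (u @ xpow n) (v @ xpow m)" and h2: "beq (v @ xpow p) (w @ xpow q)"
    unfolding vrel_def by blast
  have "beq (u @ xpow (n + p)) (v @ xpow m @ xpow p)"
    using beq_appR[OF h1, of "xpow p"] by (simp add: xpow_add)
  also have "v @ xpow m @ xpow p = (v @ xpow p) @ xpow m"
    by (simp add: xpow_add[symmetric] add.commute)
  also have "beq \<dots> ((w @ xpow q) @ xpow m)" using beq_appR[OF h2] .
  also have "(w @ xpow q) @ xpow m = w @ xpow (q + m)" by (simp add: xpow_add)
  finally show ?thesis unfolding vrel_def by blast
qed

lemma vert_eq_iff: "vert u = vert v \<longleftrightarrow> vrel u v"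
proof
  assume "vert u = vert v"
  then have "v \<in> vert u" using vrel_refl[of v] unfolding vert_vrel by simp
  then show "vrel u v" unfolding vert_vrel by simp
next
  assume h: "vrel u v"
  show "vert u = vert v" unfolding vert_vrel
    using h vrel_sym vrel_trans by blast
qed

lemma beq_vert: "beq u v \<Longrightarrow> vert u = vert v"
  unfolding vert_eq_iff vrel_def by (rule exI[of _ 0], rule exI[of _ 0]) (simp add: xpow_0)

lemma vert_xword: "vert (w @ xword) = vert w"
  unfolding vert_eq_iff vrel_def
  by (rule exI[of _ 0], rule exI[of _ 1]) (simp add: xpow_0 xpow_def beq_refl)

lemma vert_sep:
  assumes "vert (g @ pos p) = vert (g @ pos q)" "length p < 3" "length q < 3"
  shows "length p = length q \<and> act (pos p) = act (pos q)"
proof -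
  obtain n m where h: "beq ((g @ pos p) @ xpow n) ((g @ pos q) @ xpow m)"
    using assms(1) unfolding vert_eq_iff vrel_def by blast
  from beq_inv[OF h] have d: "deg g + int (length p) + 3 * int n = deg g + int (length q) + 3 * int m"
    and a: "act g \<circ> act (pos p) \<circ> act (xpow n) = act g \<circ> act (pos q) \<circ> act (xpow m)"
    by (auto simp: deg_append deg_pos deg_xpow act_append comp_assoc)
  from d assms(2,3) have l: "length p = length q" and nm: "n = m" by presburger+
  have "act (pos p) = act (pos q)"
  proof
    fix k
    obtain y where y: "k = act (xpow n) y" using act_bij[of "xpow n"] by (metis bij_pointE)
    have "act g (act (pos p) (act (xpow n) y)) = act g (act (pos q) (act (xpow n) y))"
      using fun_cong[OF a, of y] nm by simp
    then show "act (pos p) k = act (pos q) k" using y act_bij[of g] by (simp add: bij_def inj_eq)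
  qed
  with l show ?thesis by simp
qed

fun tau :: "gen \<Rightarrow> gen" where
  "tau Ga = Gf" | "tau Gb = Gd" | "tau Gc = Ge" | "tau Gd = Gb" | "tau Ge = Ga" | "tau Gf = Gc"

lemma tau4: "(tau ^^ 4) = id"
proof
  fix g show "(tau ^^ 4) g = id g" by (cases g) (simp_all add: numeral_eq_Suc)
qed

lemma tau_period: "(tau ^^ (m + 4 * n)) = (tau ^^ m)"
proof (induction n)
  case 0 then show ?case by simp
next
  case (Suc n)
  have "tau ^^ (m + 4 * Suc n) = (tau ^^ (m + 4 * n)) \<circ> (tau ^^ 4)"
    by (simp add: funpow_add[symmetric] algebra_simps)
  then show ?case using Suc tau4 by simp
qed

lemma comm1: "beq (pos [s] @ xword) (xword @ pos [tau s])"
proof -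
  have e1: "pos [s] @ xword = pos [s, Gb, Ga, Gc]" by (simp add: xword_def pos_def)
  have e2: "xword @ pos [tau s] = pos [Gb, Ga, Gc, tau s]" by (simp add: xword_def pos_def)
  show ?thesis unfolding e1 e2
    by (cases s) (simp_all add: comm_a comm_b comm_c comm_d comm_e comm_f)
qed

lemma commk: "beq (pos [s] @ xpow k) (xpow k @ pos [(tau ^^ k) s])"
proof (induction k arbitrary: s)
  case 0 then show ?case by (simp add: xpow_0 beq_refl)
next
  case (Suc k)
  have "beq (pos [s] @ xpow (Suc k)) ((pos [s] @ xword) @ xpow k)" by (simp add: xpow_Suc beq_refl)
  also have "beq \<dots> ((xword @ pos [tau s]) @ xpow k)" by (rule beq_appR[OF comm1])
  also have "(xword @ pos [tau s]) @ xpow k = xword @ (pos [tau s] @ xpow k)" by simp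
  also have "beq \<dots> (xword @ (xpow k @ pos [(tau ^^ k) (tau s)]))" by (rule beq_appL[OF Suc])
  also have "xword @ (xpow k @ pos [(tau ^^ k) (tau s)]) = xpow (Suc k) @ pos [(tau ^^ Suc k) s]"
    by (simp add: xpow_Suc funpow_swap1)
  finally show ?case .
qed

lemma commw: "beq (pos ws @ xpow k) (xpow k @ pos (map (tau ^^ k) ws))"
proof (induction ws)
  case Nil then show ?case by (simp add: pos_def beq_refl)
next
  case (Cons s ws)
  have "pos (s # ws) @ xpow k = pos [s] @ (pos ws @ xpow k)" by (simp add: pos_def)
  also have "beq \<dots> (pos [s] @ (xpow k @ pos (map (tau ^^ k) ws)))" by (rule beq_appL[OF Cons])
  also have "pos [s] @ (xpow k @ pos (map (tau ^^ k) ws)) = (pos [s] @ xpow k) @ pos (map (tau ^^ k) ws)" by simp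
  also have "beq \<dots> ((xpow k @ pos [(tau ^^ k) s]) @ pos (map (tau ^^ k) ws))" by (rule beq_appR[OF commk])
  also have "(xpow k @ pos [(tau ^^ k) s]) @ pos (map (tau ^^ k) ws) = xpow k @ pos (map (tau ^^ k) (s # ws))"
    by (simp add: pos_def)
  finally show ?case .
qed

lemma vmove:
  assumes h: "beq (g @ xpow n) (w @ xpow m)"
  shows "vert (w @ pos ws) = vert (g @ pos (map (tau ^^ (m + 3 * n)) ws))"
proof -
  have "beq ((w @ pos ws) @ xpow m) (w @ (xpow m @ pos (map (tau ^^ m) ws)))"
    using beq_appL[OF commw, of w ws m] by simp
  also have "w @ (xpow m @ pos (map (tau ^^ m) ws)) = (w @ xpow m) @ pos (map (tau ^^ m) ws)" by simp
  also have "beq \<dots> ((g @ xpow n) @ pos (map (tau ^^ m) ws))" by (rule beq_appR[OF beq_sym[OF h]])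
  also have "(tau ^^ m) = (tau ^^ n) \<circ> (tau ^^ (m + 3 * n))"
    using tau_period[of m n] by (simp add: funpow_add[symmetric] algebra_simps)
  then have "(g @ xpow n) @ pos (map (tau ^^ m) ws) = g @ (xpow n @ pos (map (tau ^^ n) (map (tau ^^ (m + 3 * n)) ws)))"
    by simp
  also have "beq \<dots> (g @ (pos (map (tau ^^ (m + 3 * n)) ws) @ xpow n))"
    by (rule beq_appL[OF beq_sym[OF commw]])
  finally have "beq ((w @ pos ws) @ xpow m) ((g @ pos (map (tau ^^ (m + 3 * n)) ws)) @ xpow n)" by simp
  then show ?thesis unfolding vert_eq_iff vrel_def by blast
qed

definition FL :: "(gen \<times> gen \<times> gen) list" where
  "FL = [(Ga,Gc,Gd), (Ga,Gd,Ge), (Ga,Ge,Gc), (Gb,Ga,Gc), (Gb,Gc,Ga), (Gc,Ga,Gd), (Gc,Gd,Gf), (Gc,Gf,Ga),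
         (Gd,Ge,Gf), (Gd,Gf,Ge), (Ge,Gb,Gc), (Ge,Gc,Gf), (Ge,Gf,Gb), (Gf,Ga,Ge), (Gf,Gb,Ga), (Gf,Ge,Gb)]"

lemma cyc3_eq: "cyc3 w = set (map (\<lambda>i. (w ! i, w ! ((i+1) mod length w), w ! ((i+2) mod length w))) [0..<length w])"
  unfolding cyc3_def by auto

lemma facts_eq: "facts = set FL"
  unfolding facts_def cyc3_eq FL_def
  by (simp add: upt_rec) auto

lemma pos_Nil[simp]: "pos [] = []" by (simp add: pos_def)

lemma FL_all: "list_all P FL \<Longrightarrow> x \<in> set FL \<Longrightarrow> P x"
  by (simp add: list_all_iff)

lemma FL_tau: "(a,b,c) \<in> set FL \<Longrightarrow> (tau a, tau b, tau c) \<in> set FL"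
proof -
  have "list_all (\<lambda>(a,b,c). (tau a, tau b, tau c) \<in> set FL) FL" by (simp add: FL_def)
  then show "(a,b,c) \<in> set FL \<Longrightarrow> (tau a, tau b, tau c) \<in> set FL" using FL_all by fastforce
qed

lemma FL_tauk: "(a,b,c) \<in> set FL \<Longrightarrow> ((tau^^k) a, (tau^^k) b, (tau^^k) c) \<in> set FL"
  by (induction k) (auto dest: FL_tau)

lemma FL_rot: "(a,b,c) \<in> set FL \<Longrightarrow> (b, c, tau a) \<in> set FL"
proof -
  have "list_all (\<lambda>(a,b,c). (b, c, tau a) \<in> set FL) FL" by (simp add: FL_def)
  then show "(a,b,c) \<in> set FL \<Longrightarrow> (b, c, tau a) \<in> set FL" using FL_all by fastforce
qed

lemma FL_x: "(a,b,c) \<in> set FL \<Longrightarrow> beq xword (pos [a,b,c])"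
proof -
  have "list_all (\<lambda>(a,b,c). beq xword (pos [a,b,c])) FL" unfolding FL_def xword_def
  by (simp add: xf_acd xf_ade xf_aec xf_bac xf_bca xf_cad xf_cdf xf_cfa xf_def xf_dfe xf_ebc
     xf_ecf xf_efb xf_fae xf_fba xf_feb)
  then show "(a,b,c) \<in> set FL \<Longrightarrow> beq xword (pos [a,b,c])" using FL_all by fastforce
qed

definition rpl :: "gen \<Rightarrow> gen \<Rightarrow> gen list" where
  "rpl a b = (if (a,b) \<in> {(Ga,Ge),(Gb,Ga),(Ge,Gb)} then [Gb,Ga]
     else if (a,b) \<in> {(Gb,Gc),(Gc,Gf),(Gf,Gb)} then [Gb,Gc]
     else if (a,b) \<in> {(Gc,Gd),(Gd,Ge),(Ge,Gc)} then [Gc,Gd]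
     else if (a,b) \<in> {(Ga,Gc),(Gc,Ga)} then [Ga,Gc]
     else if (a,b) \<in> {(Ge,Gf),(Gf,Ge)} then [Ge,Gf] else [Ga,Gd])"

lemma FL_rp: "(a,b,c) \<in> set FL \<Longrightarrow> beq (pos [a,b]) (pos (rpl a b))"
proof -
  have "list_all (\<lambda>(a,b,c). beq (pos [a,b]) (pos (rpl a b))) FL" unfolding FL_def
  by (simp add: rpl_def rp_acd rp_ade rp_aec rp_bac rp_bca rp_cad rp_cdf rp_cfa rp_def rp_dfe rp_ebc
     rp_ecf rp_efb rp_fae rp_fba rp_feb)
  then show "(a,b,c) \<in> set FL \<Longrightarrow> beq (pos [a,b]) (pos (rpl a b))" using FL_all by fastforce
qed

lemma face_at:
  assumes "T \<in> faces" "vert g \<in> T"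
  shows "\<exists>a b c. (a,b,c) \<in> set FL \<and> T = {vert g, vert (g @ pos [a]), vert (g @ pos [a,b])}"
proof -
  obtain w a1 a2 a3 where T: "T = {vert w, vert (w @ pos [a1]), vert (w @ pos [a1, a2])}"
    and f: "(a1,a2,a3) \<in> set FL"
    using assms(1) unfolding faces_def facts_eq by blast
  from assms(2) T consider "vert g = vert w" | "vert g = vert (w @ pos [a1])"
    | "vert g = vert (w @ pos [a1,a2])" by blast
  then show ?thesis
  proof cases
    case 1
    then obtain n m where h: "beq (g @ xpow n) (w @ xpow m)" unfolding vert_eq_iff vrel_def by blast
    define t where "t = tau ^^ (m + 3*n)"
    have v1: "vert (w @ pos [a1]) = vert (g @ pos [t a1])" using vmove[OF h, of "[a1]"] by (simp add: t_def)
    have v2: "vert (w @ pos [a1,a2]) = vert (g @ pos [t a1, t a2])"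
      using vmove[OF h, of "[a1,a2]"] by (simp add: t_def)
    have "(t a1, t a2, t a3) \<in> set FL" unfolding t_def by (rule FL_tauk[OF f])
    then show ?thesis using T v1 v2 1 by blast
  next
    case 2
    then obtain n m where h: "beq (g @ xpow n) ((w @ pos [a1]) @ xpow m)" unfolding vert_eq_iff vrel_def by blast
    define t where "t = tau ^^ (m + 3*n)"
    have "vert w = vert (w @ xword)" by (rule vert_xword[symmetric])
    also have "\<dots> = vert (w @ pos [a1,a2,a3])" by (rule beq_vert[OF beq_appL[OF FL_x[OF f]]])
    also have "w @ pos [a1,a2,a3] = (w @ pos [a1]) @ pos [a2,a3]" by (simp add: pos_def)
    also have "vert \<dots> = vert (g @ pos [t a2, t a3])" using vmove[OF h, of "[a2,a3]"] by (simp add: t_def)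
    finally have v0: "vert w = vert (g @ pos [t a2, t a3])" .
    have v2: "vert (w @ pos [a1,a2]) = vert (g @ pos [t a2])"
      using vmove[OF h, of "[a2]"] by (simp add: t_def pos_def)
    have "(t a2, t a3, t (tau a1)) \<in> set FL" unfolding t_def by (rule FL_tauk[OF FL_rot[OF f]])
    moreover have "T = {vert g, vert (g @ pos [t a2]), vert (g @ pos [t a2, t a3])}"
      using T v0 v2 2 by blast
    ultimately show ?thesis by blast
  next
    case 3
    then obtain n m where h: "beq (g @ xpow n) ((w @ pos [a1,a2]) @ xpow m)" unfolding vert_eq_iff vrel_def by blast
    define t where "t = tau ^^ (m + 3*n)"
    have "vert w = vert (w @ xword)" by (rule vert_xword[symmetric])
    also have "\<dots> = vert (w @ pos [a1,a2,a3])" by (rule beq_vert[OF beq_appL[OF FL_x[OF f]]])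
    also have "w @ pos [a1,a2,a3] = (w @ pos [a1,a2]) @ pos [a3]" by (simp add: pos_def)
    also have "vert \<dots> = vert (g @ pos [t a3])" using vmove[OF h, of "[a3]"] by (simp add: t_def)
    finally have v0: "vert w = vert (g @ pos [t a3])" .
    have f2: "(a2, a3, tau a1) \<in> set FL" by (rule FL_rot[OF f])
    have "vert (w @ pos [a1]) = vert ((w @ pos [a1]) @ xword)" by (rule vert_xword[symmetric])
    also have "\<dots> = vert ((w @ pos [a1]) @ pos [a2, a3, tau a1])" by (rule beq_vert[OF beq_appL[OF FL_x[OF f2]]])
    also have "(w @ pos [a1]) @ pos [a2, a3, tau a1] = (w @ pos [a1,a2]) @ pos [a3, tau a1]" by (simp add: pos_def)
    also have "vert \<dots> = vert (g @ pos [t a3, t (tau a1)])" using vmove[OF h, of "[a3, tau a1]"] by (simp add: t_def)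
    finally have v1: "vert (w @ pos [a1]) = vert (g @ pos [t a3, t (tau a1)])" .
    have "(t a3, t (tau a1), t (tau a2)) \<in> set FL" unfolding t_def by (rule FL_tauk[OF FL_rot[OF f2]])
    moreover have "T = {vert g, vert (g @ pos [t a3]), vert (g @ pos [t a3, t (tau a1)])}"
      using T v0 v1 3 by blast
    ultimately show ?thesis by blast
  qed
qed

definition LV1 :: "gen list list" where "LV1 = [[Ga],[Gb],[Gc],[Gd],[Ge],[Gf]]"
definition LV2 :: "gen list list" where "LV2 = [[Gb,Ga],[Gb,Gc],[Gc,Gd],[Ga,Gc],[Ge,Gf],[Ga,Gd]]"
definition LV0 :: "gen list list" where "LV0 = [] # LV1 @ LV2"

definition alist :: "gen list \<Rightarrow> nat list" where "alist p = map (act (pos p)) [0,1,2,3]"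

lemma LV0_sep: "\<forall>p\<in>set LV0. \<forall>q\<in>set LV0. p \<noteq> q \<longrightarrow> length p \<noteq> length q \<or> alist p \<noteq> alist q"
  unfolding LV0_def LV1_def LV2_def alist_def pos_def by (simp add: sw_def)

lemma LV0_len: "p \<in> set LV0 \<Longrightarrow> length p < 3"
  unfolding LV0_def LV1_def LV2_def by auto

definition phi :: "word \<Rightarrow> gen list \<Rightarrow> vertex" where "phi g p = vert (g @ pos p)"

lemma phi_inj: "p \<in> set LV0 \<Longrightarrow> q \<in> set LV0 \<Longrightarrow> phi g p = phi g q \<Longrightarrow> p = q"
  unfolding phi_def using vert_sep LV0_len LV0_sep unfolding alist_def by metis

lemma phi_nil: "phi g [] = vert g" by (simp add: phi_def pos_def)

definition EL :: "(gen list \<times> gen list) list" where "EL = map (\<lambda>(a,b,c). ([a], rpl a b)) FL"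

lemma EL_props: "e \<in> set EL \<Longrightarrow> fst e \<in> set LV1 \<and> snd e \<in> set LV2"
proof -
  have "list_all (\<lambda>e. fst e \<in> set LV1 \<and> snd e \<in> set LV2) EL"
    unfolding EL_def FL_def LV1_def LV2_def rpl_def by simp
  then show "e \<in> set EL \<Longrightarrow> fst e \<in> set LV1 \<and> snd e \<in> set LV2" by (simp add: list_all_iff)
qed

definition Tr :: "word \<Rightarrow> gen list \<times> gen list \<Rightarrow> vertex set" where
  "Tr g e = {phi g [], phi g (fst e), phi g (snd e)}"

lemma faceA: "(T \<in> faces \<and> vert g \<in> T) \<longleftrightarrow> (\<exists>e\<in>set EL. T = Tr g e)"
proof
  assume "T \<in> faces \<and> vert g \<in> T"
  then obtain a b c where f: "(a,b,c) \<in> set FL" and T: "T = {vert g, vert (g @ pos [a]), vert (g @ pos [a,b])}"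
    using face_at by blast
  have "vert (g @ pos [a,b]) = phi g (rpl a b)" unfolding phi_def by (rule beq_vert[OF beq_appL[OF FL_rp[OF f]]])
  then have "T = Tr g ([a], rpl a b)" unfolding T Tr_def by (simp add: phi_nil phi_def)
  moreover have "([a], rpl a b) \<in> set EL" using f unfolding EL_def by force
  ultimately show "\<exists>e\<in>set EL. T = Tr g e" by blast
next
  assume "\<exists>e\<in>set EL. T = Tr g e"
  then obtain a b c where f: "(a,b,c) \<in> set FL" and T: "T = Tr g ([a], rpl a b)"
    unfolding EL_def by auto
  have "vert (g @ pos [a,b]) = phi g (rpl a b)" unfolding phi_def by (rule beq_vert[OF beq_appL[OF FL_rp[OF f]]])
  then have T': "T = {vert g, vert (g @ pos [a]), vert (g @ pos [a,b])}" unfolding T Tr_def by (simp add: phi_nil phi_def)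
  have "T \<in> faces" unfolding T' faces_def facts_eq using f by blast
  then show "T \<in> faces \<and> vert g \<in> T" using T' by simp
qed

type_synonym edge = "gen list \<times> gen list"

definition lbl :: "edge \<Rightarrow> edge \<Rightarrow> gen list list" where
  "lbl e1 e2 = [[], fst e1, snd e1, fst e2, snd e2]"

definition lozE :: "edge \<Rightarrow> edge \<Rightarrow> bool" where
  "lozE e1 e2 \<longleftrightarrow> e1 \<in> set EL \<and> e2 \<in> set EL \<and> e1 \<noteq> e2
     \<and> card ({fst e1, snd e1} \<inter> {fst e2, snd e2}) = 1
     \<and> length (filter (\<lambda>e. {fst e1, snd e1} \<inter> {fst e2, snd e2} \<subseteq> {fst e, snd e}) EL) = 2"

definition cyc :: "gen list list \<Rightarrow> nat \<Rightarrow> edge \<Rightarrow> bool" where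
  "cyc hl i e \<longleftrightarrow> (fst e = hl ! i \<and> snd e = hl ! ((i+1) mod 6)) \<or> (snd e = hl ! i \<and> fst e = hl ! ((i+1) mod 6))"

definition hexok :: "gen list list \<Rightarrow> bool" where
  "hexok hl \<longleftrightarrow> length hl = 6 \<and> distinct hl \<and> list_all (\<lambda>x. x \<in> set LV0 \<and> x \<noteq> []) hl
     \<and> list_all (\<lambda>i. list_ex (cyc hl i) EL) [0,1,2,3,4,5]"

definition inhex :: "gen list list \<Rightarrow> edge \<Rightarrow> bool" where
  "inhex hl e \<longleftrightarrow> list_ex (\<lambda>i. cyc hl i e) [0,1,2,3,4,5]"

definition disjL :: "gen list list \<Rightarrow> gen list list \<Rightarrow> bool" where
  "disjL L L' \<longleftrightarrow> list_all (\<lambda>x. x \<in> set L' \<longrightarrow> x = []) L"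

definition TAB :: "((edge \<times> edge) \<times> (edge \<times> edge) \<times> (edge \<times> edge) \<times> gen list list \<times> gen list list) list" where
  "TAB = [((([Ga],[Ga,Gc]),([Gc],[Ga,Gc])), (([Gb],[Gb,Ga]),([Gb],[Gb,Gc])), (([Gd],[Gc,Gd]),([Gd],[Ga,Gd])), [[Ga],[Ga,Gc],[Gc],[Gb,Gc],[Gb],[Gb,Ga]], [[Ga],[Ga,Gc],[Gc],[Gc,Gd],[Gd],[Ga,Gd]]),
    ((([Gb],[Gb,Ga]),([Gb],[Gb,Gc])), (([Ga],[Ga,Gc]),([Gc],[Ga,Gc])), (([Ge],[Ge,Gf]),([Gf],[Ge,Gf])), [[Ga],[Ga,Gc],[Gc],[Gb,Gc],[Gb],[Gb,Ga]], [[Gb],[Gb,Ga],[Ge],[Ge,Gf],[Gf],[Gb,Gc]]),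
    ((([Gb],[Gb,Gc]),([Gb],[Gb,Ga])), (([Ga],[Ga,Gc]),([Gc],[Ga,Gc])), (([Ge],[Ge,Gf]),([Gf],[Ge,Gf])), [[Ga],[Ga,Gc],[Gc],[Gb,Gc],[Gb],[Gb,Ga]], [[Gb],[Gb,Ga],[Ge],[Ge,Gf],[Gf],[Gb,Gc]]),
    ((([Gc],[Ga,Gc]),([Ga],[Ga,Gc])), (([Gb],[Gb,Ga]),([Gb],[Gb,Gc])), (([Gd],[Gc,Gd]),([Gd],[Ga,Gd])), [[Ga],[Ga,Gc],[Gc],[Gb,Gc],[Gb],[Gb,Ga]], [[Ga],[Ga,Gc],[Gc],[Gc,Gd],[Gd],[Ga,Gd]]),
    ((([Gd],[Gc,Gd]),([Gd],[Ga,Gd])), (([Ga],[Ga,Gc]),([Gc],[Ga,Gc])), (([Ge],[Ge,Gf]),([Gf],[Ge,Gf])), [[Ga],[Ga,Gc],[Gc],[Gc,Gd],[Gd],[Ga,Gd]], [[Ga,Gd],[Gd],[Gc,Gd],[Ge],[Ge,Gf],[Gf]]),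
    ((([Gd],[Ga,Gd]),([Gd],[Gc,Gd])), (([Ga],[Ga,Gc]),([Gc],[Ga,Gc])), (([Ge],[Ge,Gf]),([Gf],[Ge,Gf])), [[Ga],[Ga,Gc],[Gc],[Gc,Gd],[Gd],[Ga,Gd]], [[Ga,Gd],[Gd],[Gc,Gd],[Ge],[Ge,Gf],[Gf]]),
    ((([Ge],[Ge,Gf]),([Gf],[Ge,Gf])), (([Gb],[Gb,Ga]),([Gb],[Gb,Gc])), (([Gd],[Gc,Gd]),([Gd],[Ga,Gd])), [[Gb],[Gb,Ga],[Ge],[Ge,Gf],[Gf],[Gb,Gc]], [[Ga,Gd],[Gd],[Gc,Gd],[Ge],[Ge,Gf],[Gf]]),
    ((([Gf],[Ge,Gf]),([Ge],[Ge,Gf])), (([Gb],[Gb,Ga]),([Gb],[Gb,Gc])), (([Gd],[Gc,Gd]),([Gd],[Ga,Gd])), [[Gb],[Gb,Ga],[Ge],[Ge,Gf],[Gf],[Gb,Gc]], [[Ga,Gd],[Gd],[Gc,Gd],[Ge],[Ge,Gf],[Gf]])]"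

definition tabok :: "(edge \<times> edge) \<times> (edge \<times> edge) \<times> (edge \<times> edge) \<times> gen list list \<times> gen list list \<Rightarrow> bool" where
  "tabok t = (case t of (z, pa, pb, ha, hb) \<Rightarrow>
      lozE (fst pa) (snd pa) \<and> lozE (fst pb) (snd pb)
    \<and> disjL (lbl (fst z) (snd z)) (lbl (fst pa) (snd pa))
    \<and> disjL (lbl (fst z) (snd z)) (lbl (fst pb) (snd pb))
    \<and> hexok ha \<and> list_all (inhex ha) [fst z, snd z, fst pa, snd pa]
    \<and> hexok hb \<and> list_all (inhex hb) [fst z, snd z, fst pb, snd pb]
    \<and> fst pa \<noteq> fst pb \<and> fst pa \<noteq> snd pb
    \<and> list_all (\<lambda>f. disjL (lbl (fst z) (snd z)) (lbl (fst f) (snd f)) \<longrightarrow>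
          f \<in> set [pa, prod.swap pa, pb, prod.swap pb]
          \<or> 4 \<le> length (remdups (filter (\<lambda>x. length x = 1) (lbl (fst z) (snd z) @ lbl (fst f) (snd f))))
          \<or> 4 \<le> length (remdups (filter (\<lambda>x. length x = 2) (lbl (fst z) (snd z) @ lbl (fst f) (snd f)))))
        (map fst TAB))"

lemma doubleton_eq: "({a, b} = {c, d}) = (a = c \<and> b = d \<or> a = d \<and> b = c)"
  by (rule doubleton_eq_iff)

lemma TAB_ok: "list_all tabok TAB"
  unfolding TAB_def tabok_def lozE_def hexok_def inhex_def cyc_def disjL_def lbl_def EL_def FL_def LV0_def LV1_def LV2_def
  by (simp add: rpl_def)

lemma LZ_all: "list_all (\<lambda>e1. list_all (\<lambda>e2. lozE e1 e2 \<longrightarrow> (e1, e2) \<in> set (map fst TAB)) EL) EL"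
  unfolding TAB_def lozE_def EL_def FL_def
  by (simp add: rpl_def)

lemma EL_distinct: "distinct EL" unfolding EL_def FL_def by (simp add: rpl_def)

lemma LV1_len: "x \<in> set LV1 \<Longrightarrow> length x = 1" unfolding LV1_def by auto
lemma LV2_len: "x \<in> set LV2 \<Longrightarrow> length x = 2" unfolding LV2_def by auto
lemma LV_sub1: "x \<in> set LV1 \<Longrightarrow> x \<in> set LV0" unfolding LV0_def by auto
lemma LV_sub2: "x \<in> set LV2 \<Longrightarrow> x \<in> set LV0" unfolding LV0_def by auto
lemma LV_nil: "[] \<in> set LV0" unfolding LV0_def by auto

lemma EL_lv:
  assumes "e \<in> set EL"
  shows "fst e \<in> set LV0" "snd e \<in> set LV0" "length (fst e) = 1" "length (snd e) = 2"
  using EL_props[OF assms] LV1_len LV2_len LV_sub1 LV_sub2 by auto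

lemma mem_Tr:
  assumes "x \<in> set LV0" "e \<in> set EL"
  shows "phi g x \<in> Tr g e \<longleftrightarrow> x = [] \<or> x = fst e \<or> x = snd e"
proof -
  have "phi g x = phi g y \<longleftrightarrow> x = y" if "y \<in> set LV0" for y
    using phi_inj[OF assms(1) that] by blast
  then show ?thesis unfolding Tr_def using EL_lv[OF assms(2)] LV_nil by auto
qed

lemma Tr_img: "Tr g e = phi g ` {[], fst e, snd e}" unfolding Tr_def by simp

lemma Tr_inj:
  assumes "e \<in> set EL" "e' \<in> set EL" "Tr g e = Tr g e'"
  shows "e = e'"
proof -
  have "phi g (fst e) \<in> Tr g e'" "phi g (snd e) \<in> Tr g e'" using assms(3) unfolding Tr_def by auto
  then have "fst e = [] \<or> fst e = fst e' \<or> fst e = snd e'" "snd e = [] \<or> snd e = fst e' \<or> snd e = snd e'"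
    using mem_Tr EL_lv assms(1,2) by blast+
  then have "fst e = fst e'" "snd e = snd e'" using EL_lv[OF assms(1)] EL_lv[OF assms(2)] by auto
  then show ?thesis by (simp add: prod_eq_iff)
qed

lemma phi_inj_on: "inj_on (phi g) (set LV0)"
  by (rule inj_onI) (rule phi_inj)

lemma S_sub: "e \<in> set EL \<Longrightarrow> {[], fst e, snd e} \<subseteq> set LV0"
  using EL_lv LV_nil by auto

lemma SInt: "e1 \<in> set EL \<Longrightarrow> e2 \<in> set EL \<Longrightarrow>
   {[], fst e1, snd e1} \<inter> {[], fst e2, snd e2} = insert [] ({fst e1, snd e1} \<inter> {fst e2, snd e2})"
  by auto

lemma Tr_Int: "e1 \<in> set EL \<Longrightarrow> e2 \<in> set EL \<Longrightarrow>
   Tr g e1 \<inter> Tr g e2 = phi g ` insert [] ({fst e1, snd e1} \<inter> {fst e2, snd e2})"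
  unfolding Tr_img SInt[symmetric] by (rule inj_on_image_Int[OF phi_inj_on S_sub S_sub, symmetric])

lemma card_Int:
  assumes "e1 \<in> set EL" "e2 \<in> set EL"
  shows "card (Tr g e1 \<inter> Tr g e2) = Suc (card ({fst e1, snd e1} \<inter> {fst e2, snd e2}))"
proof -
  have sub: "insert [] ({fst e1, snd e1} \<inter> {fst e2, snd e2}) \<subseteq> set LV0" using S_sub[OF assms(1)] by auto
  have "card (Tr g e1 \<inter> Tr g e2) = card (insert [] ({fst e1, snd e1} \<inter> {fst e2, snd e2}))"
    unfolding Tr_Int[OF assms] by (rule card_image[OF inj_on_subset[OF phi_inj_on sub]])
  also have "\<dots> = Suc (card ({fst e1, snd e1} \<inter> {fst e2, snd e2}))"
    using EL_lv[OF assms(1)] by (subst card_insert_disjoint) auto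
  finally show ?thesis .
qed

lemma Tr_face: "e \<in> set EL \<Longrightarrow> Tr g e \<in> faces"
  using faceA by blast

lemma vert_in_Tr: "vert g \<in> Tr g e" unfolding Tr_def phi_nil by simp

lemma faces_cnt:
  assumes "e1 \<in> set EL" "e2 \<in> set EL"
  shows "card {T\<in>faces. Tr g e1 \<inter> Tr g e2 \<subseteq> T}
     = length (filter (\<lambda>e. {fst e1, snd e1} \<inter> {fst e2, snd e2} \<subseteq> {fst e, snd e}) EL)"
proof -
  define P where "P = {fst e1, snd e1} \<inter> {fst e2, snd e2}"
  have PL: "P \<subseteq> set LV0" and Pn: "[] \<notin> P" unfolding P_def using EL_lv[OF assms(1)] by auto
  have eq: "{T\<in>faces. Tr g e1 \<inter> Tr g e2 \<subseteq> T} = Tr g ` set (filter (\<lambda>e. P \<subseteq> {fst e, snd e}) EL)"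
  proof (intro set_eqI iffI)
    fix T assume T: "T \<in> {T\<in>faces. Tr g e1 \<inter> Tr g e2 \<subseteq> T}"
    then have "vert g \<in> T" using vert_in_Tr[of g e1] vert_in_Tr[of g e2] by auto
    then obtain e where e: "e \<in> set EL" "T = Tr g e" using faceA T by blast
    have "P \<subseteq> {fst e, snd e}"
    proof
      fix y assume y: "y \<in> P"
      then have "phi g y \<in> Tr g e1 \<inter> Tr g e2" unfolding Tr_Int[OF assms] P_def by blast
      then have "phi g y \<in> Tr g e" using T e by auto
      then show "y \<in> {fst e, snd e}" using mem_Tr[of y e g] y PL Pn e(1) by auto
    qed
    then show "T \<in> Tr g ` set (filter (\<lambda>e. P \<subseteq> {fst e, snd e}) EL)" using e by auto
  next
    fix T assume "T \<in> Tr g ` set (filter (\<lambda>e. P \<subseteq> {fst e, snd e}) EL)"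
    then obtain e where e: "e \<in> set EL" "P \<subseteq> {fst e, snd e}" "T = Tr g e" by auto
    have "insert [] P \<subseteq> {[], fst e, snd e}" using e(2) by auto
    then have "phi g ` insert [] P \<subseteq> phi g ` {[], fst e, snd e}" by (rule image_mono)
    moreover have "Tr g e1 \<inter> Tr g e2 = phi g ` insert [] P" using Tr_Int[OF assms] P_def by simp
    moreover have "T = phi g ` {[], fst e, snd e}" using e(3) Tr_img by simp
    ultimately have "Tr g e1 \<inter> Tr g e2 \<subseteq> T" by simp
    then show "T \<in> {T\<in>faces. Tr g e1 \<inter> Tr g e2 \<subseteq> T}" using Tr_face[OF e(1)] e(3) by auto
  qed
  have inj: "inj_on (Tr g) (set (filter (\<lambda>e. P \<subseteq> {fst e, snd e}) EL))"
  proof (rule inj_onI)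
    fix x y assume "x \<in> set (filter (\<lambda>e. P \<subseteq> {fst e, snd e}) EL)"
      "y \<in> set (filter (\<lambda>e. P \<subseteq> {fst e, snd e}) EL)" "Tr g x = Tr g y"
    then show "x = y" using Tr_inj[of x y g] by simp
  qed
  show ?thesis unfolding eq card_image[OF inj] P_def[symmetric]
    by (rule distinct_card[OF distinct_filter[OF EL_distinct]])
qed

lemma loz_char:
  assumes "\<forall>T\<in>R. vert g \<in> T"
  shows "lozenge R \<longleftrightarrow> (\<exists>e1 e2. lozE e1 e2 \<and> R = {Tr g e1, Tr g e2})"
proof
  assume "lozenge R"
  then obtain T1 T2 where R: "R = {T1,T2}" and f: "T1 \<in> faces" "T2 \<in> faces" "T1 \<noteq> T2"
    "card (T1 \<inter> T2) = 2" "card {T\<in>faces. T1 \<inter> T2 \<subseteq> T} = 2" unfolding lozenge_def by blast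
  have "vert g \<in> T1" "vert g \<in> T2" using assms R by auto
  then obtain e1 e2 where e1: "e1 \<in> set EL" "T1 = Tr g e1" and e2: "e2 \<in> set EL" "T2 = Tr g e2"
    using faceA f(1,2) by meson
  have c1: "card ({fst e1, snd e1} \<inter> {fst e2, snd e2}) = 1"
    using card_Int[OF e1(1) e2(1), of g] f(4) unfolding e1(2) e2(2) by simp
  have c2: "length (filter (\<lambda>e. {fst e1, snd e1} \<inter> {fst e2, snd e2} \<subseteq> {fst e, snd e}) EL) = 2"
    using faces_cnt[OF e1(1) e2(1), of g] f(5) unfolding e1(2) e2(2) by simp
  have "e1 \<noteq> e2" using f(3) unfolding e1(2) e2(2) by metis
  then have "lozE e1 e2" unfolding lozE_def using e1(1) e2(1) c1 c2 by blast
  then show "\<exists>e1 e2. lozE e1 e2 \<and> R = {Tr g e1, Tr g e2}" using R e1 e2 by blast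
next
  assume "\<exists>e1 e2. lozE e1 e2 \<and> R = {Tr g e1, Tr g e2}"
  then obtain e1 e2 where l: "lozE e1 e2" and R: "R = {Tr g e1, Tr g e2}" by blast
  from l have e: "e1 \<in> set EL" "e2 \<in> set EL" "e1 \<noteq> e2" unfolding lozE_def by auto
  have "Tr g e1 \<noteq> Tr g e2" using Tr_inj e by blast
  moreover have "card (Tr g e1 \<inter> Tr g e2) = 2" using card_Int[OF e(1,2)] l unfolding lozE_def by simp
  moreover have "card {T\<in>faces. Tr g e1 \<inter> Tr g e2 \<subseteq> T} = 2" using faces_cnt[OF e(1,2)] l unfolding lozE_def by simp
  ultimately show "lozenge R" unfolding lozenge_def R using Tr_face e by blast
qed

lemma lbl_sub: "e1 \<in> set EL \<Longrightarrow> e2 \<in> set EL \<Longrightarrow> set (lbl e1 e2) \<subseteq> set LV0"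
  unfolding lbl_def using EL_lv LV_nil by auto

lemma UTr: "\<Union>{Tr g e1, Tr g e2} = phi g ` set (lbl e1 e2)"
  unfolding Tr_def lbl_def by auto

lemma disj_transfer:
  assumes "e1 \<in> set EL" "e2 \<in> set EL" "f1 \<in> set EL" "f2 \<in> set EL"
  shows "(\<Union>{Tr g e1, Tr g e2} \<inter> \<Union>{Tr g f1, Tr g f2} = {vert g}) \<longleftrightarrow> disjL (lbl e1 e2) (lbl f1 f2)"
proof -
  have s1: "set (lbl e1 e2) \<inter> set (lbl f1 f2) \<subseteq> set LV0" using lbl_sub[OF assms(1,2)] by auto
  have "\<Union>{Tr g e1, Tr g e2} \<inter> \<Union>{Tr g f1, Tr g f2} = phi g ` (set (lbl e1 e2) \<inter> set (lbl f1 f2))"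
    unfolding UTr by (rule inj_on_image_Int[OF phi_inj_on lbl_sub[OF assms(1,2)] lbl_sub[OF assms(3,4)], symmetric])
  moreover have "{vert g} = phi g ` {[]}" by (simp add: phi_nil)
  moreover have "phi g ` (set (lbl e1 e2) \<inter> set (lbl f1 f2)) = phi g ` {[]}
      \<longleftrightarrow> set (lbl e1 e2) \<inter> set (lbl f1 f2) = {[]}"
    by (rule inj_on_image_eq_iff[OF phi_inj_on s1]) (simp add: LV_nil)
  moreover have "set (lbl e1 e2) \<inter> set (lbl f1 f2) = {[]} \<longleftrightarrow> disjL (lbl e1 e2) (lbl f1 f2)"
  proof -
    have "[] \<in> set (lbl e1 e2)" "[] \<in> set (lbl f1 f2)" by (simp_all add: lbl_def)
    then show ?thesis unfolding disjL_def list_all_iff by blast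
  qed
  ultimately show ?thesis by presburger
qed

definition HX :: "word \<Rightarrow> gen list list \<Rightarrow> vertex set set" where
  "HX g hl = {{vert g, phi g (hl ! i), phi g (hl ! ((i + 1) mod 6))} | i. i < 6}"

lemma lt6: "i < (6::nat) \<Longrightarrow> i = 0 \<or> i = 1 \<or> i = 2 \<or> i = 3 \<or> i = 4 \<or> i = 5" by auto

lemma all6: "list_all P [0,1,2,3,4,5::nat] \<Longrightarrow> i < 6 \<Longrightarrow> P i"
  using lt6[of i] by auto

lemma ex6: "list_ex P [0,1,2,3,4,5::nat] \<Longrightarrow> \<exists>i<6. P i"
proof -
  assume "list_ex P [0,1,2,3,4,5::nat]"
  then obtain x where "x \<in> set [0,1,2,3,4,5::nat]" "P x" unfolding list_ex_iff by blast
  moreover have "x \<in> set [0,1,2,3,4,5::nat] \<Longrightarrow> x < 6" by auto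
  ultimately show ?thesis by blast
qed

lemma cyc_Tr: "cyc hl i e \<Longrightarrow> Tr g e = {vert g, phi g (hl ! i), phi g (hl ! ((i+1) mod 6))}"
  unfolding cyc_def Tr_def phi_nil by auto

lemma inhex_HX: "inhex hl e \<Longrightarrow> Tr g e \<in> HX g hl"
proof -
  assume "inhex hl e"
  then obtain i where "i < 6" "cyc hl i e" unfolding inhex_def using ex6 by blast
  then show ?thesis unfolding HX_def using cyc_Tr by blast
qed

lemma hex_pos:
  assumes "hexok hl"
  shows "flat_hexagon (HX g hl)"
proof -
  from assms have len: "length hl = 6" and d: "distinct hl" and lv0: "list_all (\<lambda>x. x \<in> set LV0 \<and> x \<noteq> []) hl"
    and cy0: "list_all (\<lambda>i. list_ex (cyc hl i) EL) [0,1,2,3,4,5]" unfolding hexok_def by auto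
  have lv: "hl ! i \<in> set LV0" "hl ! i \<noteq> []" if "i < 6" for i
    using lv0 that len by (auto simp: list_all_iff)
  have cy: "\<exists>e\<in>set EL. cyc hl i e" if "i < 6" for i
    using all6[OF cy0 that] by (simp add: list_ex_iff)
  define u where "u i = phi g (hl ! i)" for i
  have inj: "inj_on u {..<6}"
  proof (rule inj_onI)
    fix i j assume ij: "i \<in> {..<6}" "j \<in> {..<6}" "u i = u j"
    then have "hl ! i = hl ! j" using phi_inj lv unfolding u_def by auto
    then show "i = j" using nth_eq_iff_index_eq[OF d, of i j] len ij by simp
  qed
  have nc: "vert g \<notin> u ` {..<6}"
  proof
    assume "vert g \<in> u ` {..<6}"
    then obtain i where i0: "i < 6" "vert g = u i" by blast
    then have i: "i < 6" "phi g [] = phi g (hl ! i)" unfolding u_def phi_nil by simp_all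
    have "[] = hl ! i" by (rule phi_inj[OF LV_nil lv(1)[OF i(1)] i(2)])
    then show False using lv(2)[OF i(1)] by simp
  qed
  have sub: "HX g hl \<subseteq> faces"
  proof
    fix T assume "T \<in> HX g hl"
    then obtain i where i: "i < 6" "T = {vert g, phi g (hl ! i), phi g (hl ! ((i+1) mod 6))}"
      unfolding HX_def by auto
    then obtain e where "e \<in> set EL" "cyc hl i e" using cy by blast
    then have "T = Tr g e" using cyc_Tr[of hl i e g] i(2) by simp
    then show "T \<in> faces" using Tr_face[of e g] \<open>e \<in> set EL\<close> by simp
  qed
  have H: "HX g hl = {{vert g, u i, u ((i + 1) mod 6)} | i. i < 6}" unfolding HX_def u_def by simp
  have "inj_on u {..<6} \<and> vert g \<notin> u ` {..<6} \<and> HX g hl = {{vert g, u i, u ((i + 1) mod 6)} | i. i < 6}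
      \<and> HX g hl \<subseteq> faces" using inj nc sub H by (intro conjI)
  then show ?thesis unfolding flat_hexagon_def by (intro exI)
qed

lemma hex_par:
  fixes u :: "nat \<Rightarrow> vertex"
  assumes inj: "inj_on u {..<6}" and nc: "vert g \<notin> u ` {..<6}"
    and fc: "\<forall>i<6. {vert g, u i, u ((i+1) mod 6)} \<in> faces"
    and Q: "Q \<subseteq> set LV0" "\<forall>x\<in>Q. length x = k" "k \<noteq> 0" "phi g ` Q \<subseteq> u ` {..<6}"
  shows "card Q \<le> 3"
proof -
  have fe: "\<exists>e\<in>set EL. {vert g, u i, u ((i+1) mod 6)} = Tr g e" if "i < 6" for i
    using fc that faceA by blast
  have ex: "\<exists>x. x \<in> set LV0 \<and> phi g x = u i" if i6: "i < 6" for i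
  proof -
    obtain e where e: "e \<in> set EL" "{vert g, u i, u ((i+1) mod 6)} = Tr g e" using fe[OF i6] by blast
    then have "u i \<in> Tr g e" by blast
    then show ?thesis using EL_lv[OF e(1)] LV_nil unfolding Tr_def by auto
  qed
  define l where "l i = (SOME x. x \<in> set LV0 \<and> phi g x = u i)" for i
  have l: "l i \<in> set LV0 \<and> phi g (l i) = u i" if "i < 6" for i
    using someI_ex[OF ex[OF that]] unfolding l_def by blast
  have alt: "length (l i) + length (l ((i+1) mod 6)) = 3" if i: "i < 6" for i
  proof -
    define j where "j = (i+1) mod 6"
    have j: "j < 6" unfolding j_def by simp
    obtain e where e: "e \<in> set EL" "{vert g, u i, u j} = Tr g e" using fe[OF i] unfolding j_def by blast
    have "phi g (l i) \<in> Tr g e" "phi g (l j) \<in> Tr g e" using l[OF i] l[OF j] e(2) by auto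
    then have m: "l i = [] \<or> l i = fst e \<or> l i = snd e" "l j = [] \<or> l j = fst e \<or> l j = snd e"
      using mem_Tr[OF _ e(1)] l[OF i] l[OF j] by blast+
    have "l i \<noteq> []" using l[OF i] nc i phi_nil by (metis image_eqI lessThan_iff)
    moreover have "l j \<noteq> []" using l[OF j] nc j phi_nil by (metis image_eqI lessThan_iff)
    moreover have "i \<noteq> j" using i unfolding j_def by (simp add: mod_if)
    then have "u i \<noteq> u j" using inj i j by (meson inj_onD lessThan_iff)
    then have "l i \<noteq> l j" using l[OF i] l[OF j] by metis
    ultimately show ?thesis using m EL_lv[OF e(1)] unfolding j_def by auto
  qed
  have a: "length (l 0) + length (l 1) = 3" "length (l 1) + length (l 2) = 3"
    "length (l 2) + length (l 3) = 3" "length (l 3) + length (l 4) = 3"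
    "length (l 4) + length (l 5) = 3"
  proof -
    have m: "((0::nat)+1) mod 6 = 1" "((1::nat)+1) mod 6 = 2" "((2::nat)+1) mod 6 = 3"
      "((3::nat)+1) mod 6 = 4" "((4::nat)+1) mod 6 = 5" by simp_all
    show "length (l 0) + length (l 1) = 3" using alt[of 0] unfolding m by simp
    show "length (l 1) + length (l 2) = 3" using alt[of 1] unfolding m by simp
    show "length (l 2) + length (l 3) = 3" using alt[of 2] unfolding m by simp
    show "length (l 3) + length (l 4) = 3" using alt[of 3] unfolding m by simp
    show "length (l 4) + length (l 5) = 3" using alt[of 4] unfolding m by simp
  qed
  define J where "J = {j. j < 6 \<and> length (l j) = k}"
  have QJ: "Q \<subseteq> l ` J"
  proof
    fix x assume x: "x \<in> Q"
    then obtain j where j: "j < 6" "phi g x = u j" using Q(4) by auto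
    then have "x = l j" using phi_inj[of x "l j" g] l[OF j(1)] Q(1) x by auto
    then show "x \<in> l ` J" unfolding J_def using j Q(2) x by auto
  qed
  have L: "length (l 1) = 3 - length (l 0)" "length (l 2) = length (l 0)" "length (l 3) = 3 - length (l 0)"
    "length (l 4) = length (l 0)" "length (l 5) = 3 - length (l 0)" using a by arith+
  have ne: "3 - length (l 0) \<noteq> length (l 0)" by presburger
  have "J \<subseteq> {0,2,4} \<or> J \<subseteq> {1,3,5}"
  proof (cases "length (l 0) = k")
    case True
    have "J \<subseteq> {0,2,4}"
    proof
      fix j assume "j \<in> J"
      then have j6: "j < 6" "length (l j) = k" unfolding J_def by auto
      from lt6[OF j6(1)] show "j \<in> {0,2,4}" using True L ne j6(2) by (elim disjE) simp_all
    qed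
    then show ?thesis by blast
  next
    case False
    have "J \<subseteq> {1,3,5}"
    proof
      fix j assume "j \<in> J"
      then have j6: "j < 6" "length (l j) = k" unfolding J_def by auto
      from lt6[OF j6(1)] show "j \<in> {1,3,5}" using False L ne j6(2) by (elim disjE) simp_all
    qed
    then show ?thesis by blast
  qed
  then have "card J \<le> 3"
  proof
    assume "J \<subseteq> {0,2,4}" then have "card J \<le> card {0,2,4::nat}" by (rule card_mono[rotated]) simp
    then show ?thesis by simp
  next
    assume "J \<subseteq> {1,3,5}" then have "card J \<le> card {1,3,5::nat}" by (rule card_mono[rotated]) simp
    then show ?thesis by simp
  qed
  moreover have "card Q \<le> card (l ` J)" using QJ by (rule card_mono[rotated]) (simp add: J_def)
  moreover have "card (l ` J) \<le> card J" by (rule card_image_le) (simp add: J_def)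
  ultimately show ?thesis by linarith
qed

lemma TAB_get:
  assumes "lozE e1 e2"
  shows "\<exists>pa pb ha hb. tabok ((e1,e2),pa,pb,ha,hb)"
proof -
  have e: "e1 \<in> set EL" "e2 \<in> set EL" using assms unfolding lozE_def by auto
  have "(e1,e2) \<in> set (map fst TAB)" using LZ_all e assms unfolding list_all_iff by blast
  then obtain t where t: "t \<in> set TAB" "fst t = (e1,e2)" by auto
  obtain z pa pb ha hb where tt: "t = (z,pa,pb,ha,hb)" by (cases t) auto
  have "tabok t" using TAB_ok t(1) unfolding list_all_iff by blast
  moreover have "z = (e1,e2)" using t(2) tt by simp
  ultimately show ?thesis using tt by blast
qed

theorem lemma12:
  assumes "lozenge R"
    and "A \<in> \<Inter> R"
  shows "card {R1. lozenge R1 \<and> \<Union> R \<inter> \<Union> R1 = {A}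
                 \<and> (\<exists>H. flat_hexagon H \<and> R \<union> R1 \<subseteq> H)} = 2"
proof -
  obtain T1 T2 where R0: "R = {T1,T2}" and T1f: "T1 \<in> faces" using assms(1) unfolding lozenge_def by blast
  have "A \<in> T1" using assms(2) R0 by auto
  then obtain g where Ag: "A = vert g" using T1f unfolding faces_def by blast
  have allA: "\<forall>T\<in>R. vert g \<in> T" using assms(2) Ag by auto
  obtain e1 e2 where lz: "lozE e1 e2" and R: "R = {Tr g e1, Tr g e2}"
    using loz_char[OF allA] assms(1) by blast
  have eEL: "e1 \<in> set EL" "e2 \<in> set EL" using lz unfolding lozE_def by auto
  obtain pa pb ha hb where ok: "tabok ((e1,e2),pa,pb,ha,hb)" using TAB_get[OF lz] by blast
  obtain a1 a2 where pa: "pa = (a1,a2)" by (cases pa)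
  obtain b1 b2 where pb: "pb = (b1,b2)" by (cases pb)
  have okk: "lozE a1 a2 \<and> lozE b1 b2
    \<and> disjL (lbl e1 e2) (lbl a1 a2) \<and> disjL (lbl e1 e2) (lbl b1 b2)
    \<and> hexok ha \<and> list_all (inhex ha) [e1, e2, a1, a2]
    \<and> hexok hb \<and> list_all (inhex hb) [e1, e2, b1, b2]
    \<and> a1 \<noteq> b1 \<and> a1 \<noteq> b2
    \<and> list_all (\<lambda>f. disjL (lbl e1 e2) (lbl (fst f) (snd f)) \<longrightarrow>
          f \<in> set [(a1,a2), prod.swap (a1,a2), (b1,b2), prod.swap (b1,b2)]
          \<or> 4 \<le> length (remdups (filter (\<lambda>x. length x = 1) (lbl e1 e2 @ lbl (fst f) (snd f))))
          \<or> 4 \<le> length (remdups (filter (\<lambda>x. length x = 2) (lbl e1 e2 @ lbl (fst f) (snd f)))))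
        (map fst TAB)"
    using ok unfolding tabok_def pa pb prod.case fst_conv snd_conv .
  then have la: "lozE a1 a2" and lb: "lozE b1 b2"
    and da: "disjL (lbl e1 e2) (lbl a1 a2)" and db: "disjL (lbl e1 e2) (lbl b1 b2)"
    and hxa: "hexok ha" and ia: "list_all (inhex ha) [e1, e2, a1, a2]"
    and hxb: "hexok hb" and ib: "list_all (inhex hb) [e1, e2, b1, b2]"
    and n1: "a1 \<noteq> b1" and n2: "a1 \<noteq> b2"
    and neg0: "list_all (\<lambda>f. disjL (lbl e1 e2) (lbl (fst f) (snd f)) \<longrightarrow>
          f \<in> set [(a1,a2), prod.swap (a1,a2), (b1,b2), prod.swap (b1,b2)]
          \<or> 4 \<le> length (remdups (filter (\<lambda>x. length x = 1) (lbl e1 e2 @ lbl (fst f) (snd f))))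
          \<or> 4 \<le> length (remdups (filter (\<lambda>x. length x = 2) (lbl e1 e2 @ lbl (fst f) (snd f)))))
        (map fst TAB)"
    by blast+
  define P where "P R1 \<longleftrightarrow> lozenge R1 \<and> \<Union> R \<inter> \<Union> R1 = {A} \<and> (\<exists>H. flat_hexagon H \<and> R \<union> R1 \<subseteq> H)" for R1
  have pos: "P {Tr g c1, Tr g c2}"
    if c: "lozE c1 c2" "disjL (lbl e1 e2) (lbl c1 c2)" "hexok h" "list_all (inhex h) [e1,e2,c1,c2]" for c1 c2 h
  proof -
    have cEL: "c1 \<in> set EL" "c2 \<in> set EL" using c(1) unfolding lozE_def by auto
    have allc: "\<forall>T\<in>{Tr g c1, Tr g c2}. vert g \<in> T" using vert_in_Tr by blast
    have L: "lozenge {Tr g c1, Tr g c2}" unfolding loz_char[OF allc] using c(1) by blast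
    have U: "\<Union>R \<inter> \<Union>{Tr g c1, Tr g c2} = {A}" unfolding R Ag disj_transfer[OF eEL cEL] by (rule c(2))
    have ih: "inhex h e1" "inhex h e2" "inhex h c1" "inhex h c2" using c(4) by simp_all
    have S: "R \<union> {Tr g c1, Tr g c2} \<subseteq> HX g h" unfolding R using inhex_HX[OF ih(1)] inhex_HX[OF ih(2)]
      inhex_HX[OF ih(3)] inhex_HX[OF ih(4)] by blast
    have hx: "flat_hexagon (HX g h)" by (rule hex_pos[OF c(3)])
    have "\<exists>H. flat_hexagon H \<and> R \<union> {Tr g c1, Tr g c2} \<subseteq> H" using hx S by blast
    then show ?thesis unfolding P_def using L U by blast
  qed
  have negc: "R1 = {Tr g a1, Tr g a2} \<or> R1 = {Tr g b1, Tr g b2}" if "P R1" for R1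
  proof -
    from that obtain H where l1: "lozenge R1" and u1: "\<Union>R \<inter> \<Union>R1 = {A}" and fh: "flat_hexagon H"
      and sub: "R \<union> R1 \<subseteq> H" unfolding P_def by blast
    from fh obtain c and u :: "nat \<Rightarrow> vertex" where inj: "inj_on u {..<6}" and cn: "c \<notin> u ` {..<6}"
      and H: "H = {{c, u i, u ((i+1) mod 6)} | i. i < 6}" and Hf: "H \<subseteq> faces"
      unfolding flat_hexagon_def by blast
    have cin: "c \<in> T" if "T \<in> H" for T using that H by auto
    obtain S1 S2 where "R1 = {S1,S2}" using l1 unfolding lozenge_def by blast
    then have "S1 \<in> R1" by simp
    then have "c \<in> \<Union>R1" using sub cin by blast
    moreover have "Tr g e1 \<in> R" unfolding R by simp
    then have "c \<in> \<Union>R" using sub cin by blast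
    ultimately have cA: "c = vert g" using u1 Ag by blast
    have allA1: "\<forall>T\<in>R1. vert g \<in> T" using sub cin cA by blast
    obtain f1 f2 where lf: "lozE f1 f2" and R1: "R1 = {Tr g f1, Tr g f2}"
      using loz_char[OF allA1] l1 by blast
    have fEL: "f1 \<in> set EL" "f2 \<in> set EL" using lf unfolding lozE_def by auto
    have dj: "disjL (lbl e1 e2) (lbl f1 f2)" using u1 unfolding R R1 Ag disj_transfer[OF eEL fEL] .
    have fin: "(f1,f2) \<in> set (map fst TAB)" using LZ_all fEL lf unfolding list_all_iff by blast
    have alt: "(f1,f2) \<in> set [(a1,a2), prod.swap (a1,a2), (b1,b2), prod.swap (b1,b2)]
          \<or> 4 \<le> length (remdups (filter (\<lambda>x. length x = 1) (lbl e1 e2 @ lbl f1 f2)))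
          \<or> 4 \<le> length (remdups (filter (\<lambda>x. length x = 2) (lbl e1 e2 @ lbl f1 f2)))"
      using neg0 fin dj unfolding list_all_iff by fastforce
    show ?thesis
    proof (cases "(f1,f2) \<in> set [(a1,a2), prod.swap (a1,a2), (b1,b2), prod.swap (b1,b2)]")
      case True then show ?thesis unfolding R1 by (auto simp: insert_commute)
    next
      case False
      then obtain k where k: "k = 1 \<or> k = 2" "4 \<le> length (remdups (filter (\<lambda>x. length x = k) (lbl e1 e2 @ lbl f1 f2)))"
        using alt by blast
      define Q where "Q = set (filter (\<lambda>x. length x = k) (lbl e1 e2 @ lbl f1 f2))"
      have cQ: "4 \<le> card Q" using k(2) unfolding Q_def by (simp add: length_remdups_card_conv)
      have Q1: "Q \<subseteq> set LV0" using lbl_sub[OF eEL] lbl_sub[OF fEL] unfolding Q_def by auto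
      have Q2: "\<forall>x\<in>Q. length x = k" unfolding Q_def by auto
      have k0: "k \<noteq> 0" using k(1) by auto
      have fc: "\<forall>i<6. {vert g, u i, u ((i+1) mod 6)} \<in> faces" using Hf H cA by auto
      have Q4: "phi g ` Q \<subseteq> u ` {..<6}"
      proof
        fix y assume "y \<in> phi g ` Q"
        then obtain x where x: "x \<in> Q" "y = phi g x" by blast
        have "x \<in> set (lbl e1 e2) \<or> x \<in> set (lbl f1 f2)" using x(1) unfolding Q_def by auto
        then have "phi g x \<in> \<Union>R \<or> phi g x \<in> \<Union>R1" unfolding R R1 UTr by blast
        then have "phi g x \<in> \<Union>H" using sub by blast
        then obtain i where i: "i < 6" "phi g x \<in> {c, u i, u ((i+1) mod 6)}" using H by auto
        have "x \<noteq> []" using Q2 x(1) k0 by auto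
        then have "phi g x \<noteq> vert g" using phi_inj[OF _ LV_nil, of x g] Q1 x(1) phi_nil by auto
        then have "phi g x = u i \<or> phi g x = u ((i+1) mod 6)" using i cA by auto
        then show "y \<in> u ` {..<6}" using i(1) x(2) by auto
      qed
      have cn': "vert g \<notin> u ` {..<6}" using cn cA by simp
      have "card Q \<le> 3" by (rule hex_par[OF inj cn' fc Q1 Q2 k0 Q4])
      with cQ show ?thesis by simp
    qed
  qed
  have "{R1. P R1} = {{Tr g a1, Tr g a2}, {Tr g b1, Tr g b2}}"
    using pos[OF la da hxa ia] pos[OF lb db hxb ib] negc by blast
  moreover have "{Tr g a1, Tr g a2} \<noteq> {Tr g b1, Tr g b2}"
  proof
    assume "{Tr g a1, Tr g a2} = {Tr g b1, Tr g b2}"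
    then have "Tr g a1 = Tr g b1 \<or> Tr g a1 = Tr g b2" by blast
    moreover have "a1 \<in> set EL" "b1 \<in> set EL" "b2 \<in> set EL" using la lb unfolding lozE_def by auto
    ultimately have "a1 = b1 \<or> a1 = b2" using Tr_inj by blast
    then show False using n1 n2 by blast
  qed
  ultimately show ?thesis unfolding P_def by simp
qed

end
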